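(* For every integer $m\geq 3$ there exists a $2$-quasigroup $\psi$ of order $2m+1$ on $\Sigma=\{0,1,\dots,2m\}$ such that for each $i\in\{0,\dots,m-1\}$, $\psi$ has $m$ $\{2i,2i+1\}$-components, and all of these $\{2i,2i+1\}$-components except one have the form $\{2j,2j+1\}\times\{2l,2l+1\}$ for some $j,l\in\{0,\dots,m-1\}$.
   Context: A $2$-quasigroup (binary quasigroup) of order $k$ on $\Sigma$, $|\Sigma|=k$, is a function $f:\Sigma^2\to\Sigma$ such that fixing either argument yields a bijection $\Sigma\to\Sigma$ in the other. For distinct $a,b\in\Sigma$, an $\{a,b\}$-component of an $n$-ary quasigroup $f:\Sigma^n\to\Sigma$ is a set $S\subset\Sigma^n$ such that (1) $f(S)=\{a,b\}$, and (2) the function obtained from $f$ by replacing the value $a$ by $b$ and $b$ by $a$ at all points of $S$ (and leaving $f$ unchanged outside $S$) is again an $n$-ary quasigroup. *)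

theory Defs
  imports Main
begin

definition quasigroup2 :: "'a set \<Rightarrow> ('a \<Rightarrow> 'a \<Rightarrow> 'a) \<Rightarrow> bool" where
  "quasigroup2 \<Sigma> f \<longleftrightarrow>
     (\<forall>x\<in>\<Sigma>. bij_betw (\<lambda>y. f x y) \<Sigma> \<Sigma>) \<and>
     (\<forall>y\<in>\<Sigma>. bij_betw (\<lambda>x. f x y) \<Sigma> \<Sigma>)"

definition switch_on :: "('a \<times> 'a) set \<Rightarrow> 'a \<Rightarrow> 'a \<Rightarrow> ('a \<Rightarrow> 'a \<Rightarrow> 'a) \<Rightarrow> ('a \<Rightarrow> 'a \<Rightarrow> 'a)" where
  "switch_on S a b f = (\<lambda>x y. if (x, y) \<in> S then
       (if f x y = a then b else if f x y = b then a else f x y) else f x y)"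

definition is_component :: "'a set \<Rightarrow> ('a \<Rightarrow> 'a \<Rightarrow> 'a) \<Rightarrow> 'a \<Rightarrow> 'a \<Rightarrow> ('a \<times> 'a) set \<Rightarrow> bool" where
  "is_component \<Sigma> f a b S \<longleftrightarrow>
     S \<subseteq> \<Sigma> \<times> \<Sigma> \<and> (\<lambda>(x, y). f x y) ` S = {a, b} \<and>
     quasigroup2 \<Sigma> (switch_on S a b f)"

text \<open>The components of a quasigroup are counted as the minimal (indecomposable)
  ones: no proper subset is again a component.\<close>
definition is_min_component :: "'a set \<Rightarrow> ('a \<Rightarrow> 'a \<Rightarrow> 'a) \<Rightarrow> 'a \<Rightarrow> 'a \<Rightarrow> ('a \<times> 'a) set \<Rightarrow> bool" where
  "is_min_component \<Sigma> f a b S \<longleftrightarrow>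
     is_component \<Sigma> f a b S \<and> (\<forall>T. T \<subset> S \<longrightarrow> \<not> is_component \<Sigma> f a b T)"

end

theory Submission
  imports Defs "HOL-Number_Theory.Cong"
begin


definition rc_closed :: "'a set \<Rightarrow> ('a \<Rightarrow> 'a \<Rightarrow> 'a) \<Rightarrow> 'a \<Rightarrow> 'a \<Rightarrow> ('a \<times> 'a) set \<Rightarrow> bool" where
  "rc_closed \<Sigma> f a b S \<longleftrightarrow>
    (\<forall>x y y'. (x,y)\<in>S \<longrightarrow> y'\<in>\<Sigma> \<longrightarrow> f x y' \<in> {a,b} \<longrightarrow> (x,y')\<in>S) \<and>
    (\<forall>x x' y. (x,y)\<in>S \<longrightarrow> x'\<in>\<Sigma> \<longrightarrow> f x' y \<in> {a,b} \<longrightarrow> (x',y)\<in>S)"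

definition tau :: "'a \<Rightarrow> 'a \<Rightarrow> 'a \<Rightarrow> 'a" where
  "tau a b v = (if v = a then b else if v = b then a else v)"

lemma rc_row: "rc_closed \<Sigma> f a b S \<Longrightarrow> (x,y)\<in>S \<Longrightarrow> y'\<in>\<Sigma> \<Longrightarrow> f x y' \<in> {a,b} \<Longrightarrow> (x,y')\<in>S"
  unfolding rc_closed_def by blast
lemma rc_col: "rc_closed \<Sigma> f a b S \<Longrightarrow> (x,y)\<in>S \<Longrightarrow> x'\<in>\<Sigma> \<Longrightarrow> f x' y \<in> {a,b} \<Longrightarrow> (x',y)\<in>S"
  unfolding rc_closed_def by blast

lemma tau_bij: "a \<in> \<Sigma> \<Longrightarrow> b \<in> \<Sigma> \<Longrightarrow> bij_betw (tau a b) \<Sigma> \<Sigma>"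
  by (rule bij_betw_byWitness[where f'="tau a b"]) (auto simp: tau_def)

lemma G1:
  assumes q: "quasigroup2 \<Sigma> f" and ab: "a \<in> \<Sigma>" "b \<in> \<Sigma>" and cl: "rc_closed \<Sigma> f a b S"
  shows "quasigroup2 \<Sigma> (switch_on S a b f)"
  unfolding quasigroup2_def
proof (intro conjI ballI)
  fix x assume x: "x \<in> \<Sigma>"
  show "bij_betw (\<lambda>y. switch_on S a b f x y) \<Sigma> \<Sigma>"
  proof (cases "\<exists>y0\<in>\<Sigma>. (x,y0)\<in>S \<and> f x y0 \<in> {a,b}")
    case True
    then obtain y0 where y0: "(x,y0)\<in>S" "f x y0 \<in> {a,b}" by blast
    have eq: "\<And>y. y \<in> \<Sigma> \<Longrightarrow> switch_on S a b f x y = tau a b (f x y)"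
    proof -
      fix y assume y: "y \<in> \<Sigma>"
      show "switch_on S a b f x y = tau a b (f x y)"
      proof (cases "(x,y)\<in>S")
        case True thus ?thesis by (simp add: switch_on_def tau_def)
      next
        case False
        thus ?thesis using rc_row[OF cl y0(1) y] by (auto simp add: switch_on_def tau_def)
      qed
    qed
    have bx: "bij_betw (f x) \<Sigma> \<Sigma>" using q x by (simp add: quasigroup2_def)
    have "bij_betw (tau a b \<circ> f x) \<Sigma> \<Sigma>"
      by (rule bij_betw_trans[OF bx tau_bij[OF ab]])
    moreover have "bij_betw (\<lambda>y. switch_on S a b f x y) \<Sigma> \<Sigma> = bij_betw (tau a b \<circ> f x) \<Sigma> \<Sigma>"
      by (rule bij_betw_cong) (simp add: eq)
    ultimately show ?thesis by simp
  next
    case False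
    have eq: "\<And>y. y \<in> \<Sigma> \<Longrightarrow> switch_on S a b f x y = f x y"
      using False by (auto simp: switch_on_def)
    have "bij_betw (f x) \<Sigma> \<Sigma>" using q x by (simp add: quasigroup2_def)
    moreover have "bij_betw (\<lambda>y. switch_on S a b f x y) \<Sigma> \<Sigma> = bij_betw (f x) \<Sigma> \<Sigma>"
      by (rule bij_betw_cong) (simp add: eq)
    ultimately show ?thesis by simp
  qed
next
  fix y assume y: "y \<in> \<Sigma>"
  show "bij_betw (\<lambda>x. switch_on S a b f x y) \<Sigma> \<Sigma>"
  proof (cases "\<exists>x0\<in>\<Sigma>. (x0,y)\<in>S \<and> f x0 y \<in> {a,b}")
    case True
    then obtain x0 where x0: "(x0,y)\<in>S" "f x0 y \<in> {a,b}" by blast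
    have eq: "\<And>x. x \<in> \<Sigma> \<Longrightarrow> switch_on S a b f x y = tau a b (f x y)"
    proof -
      fix x assume x: "x \<in> \<Sigma>"
      show "switch_on S a b f x y = tau a b (f x y)"
      proof (cases "(x,y)\<in>S")
        case True thus ?thesis by (simp add: switch_on_def tau_def)
      next
        case False
        thus ?thesis using rc_col[OF cl x0(1) x] by (auto simp add: switch_on_def tau_def)
      qed
    qed
    have bx: "bij_betw (\<lambda>x. f x y) \<Sigma> \<Sigma>" using q y by (simp add: quasigroup2_def)
    have "bij_betw (tau a b \<circ> (\<lambda>x. f x y)) \<Sigma> \<Sigma>"
      by (rule bij_betw_trans[OF bx tau_bij[OF ab]])
    moreover have "bij_betw (\<lambda>x. switch_on S a b f x y) \<Sigma> \<Sigma> = bij_betw (tau a b \<circ> (\<lambda>x. f x y)) \<Sigma> \<Sigma>"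
      by (rule bij_betw_cong) (simp add: eq)
    ultimately show ?thesis by simp
  next
    case False
    have eq: "\<And>x. x \<in> \<Sigma> \<Longrightarrow> switch_on S a b f x y = f x y"
      using False by (auto simp: switch_on_def)
    have "bij_betw (\<lambda>x. f x y) \<Sigma> \<Sigma>" using q y by (simp add: quasigroup2_def)
    moreover have "bij_betw (\<lambda>x. switch_on S a b f x y) \<Sigma> \<Sigma> = bij_betw (\<lambda>x. f x y) \<Sigma> \<Sigma>"
      by (rule bij_betw_cong) (simp add: eq)
    ultimately show ?thesis by simp
  qed
qed

lemma G2:
  assumes q: "quasigroup2 \<Sigma> f" and ab: "a \<noteq> b" and c: "is_component \<Sigma> f a b S"
  shows "rc_closed \<Sigma> f a b S"
  unfolding rc_closed_def
proof (intro conjI allI impI)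
  have sub: "S \<subseteq> \<Sigma> \<times> \<Sigma>" and img: "(\<lambda>(x, y). f x y) ` S = {a, b}"
    and q2: "quasigroup2 \<Sigma> (switch_on S a b f)" using c unfolding is_component_def by auto
  fix x y y' assume xy: "(x,y)\<in>S" and y': "y'\<in>\<Sigma>" and v: "f x y' \<in> {a,b}"
  show "(x,y')\<in>S"
  proof (rule ccontr)
    assume n: "(x,y') \<notin> S"
    have x: "x\<in>\<Sigma>" and y: "y \<in> \<Sigma>" using xy sub by auto
    have fy: "f x y \<in> {a,b}" using img xy by force
    have "y \<noteq> y'" using n xy by auto
    moreover have "inj_on (f x) \<Sigma>" using q x by (simp add: quasigroup2_def bij_betw_def)
    ultimately have "f x y \<noteq> f x y'" using y y' by (metis inj_onD)
    hence "switch_on S a b f x y = switch_on S a b f x y'"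
      using fy v xy n by (auto simp: switch_on_def)
    moreover have "inj_on (\<lambda>y. switch_on S a b f x y) \<Sigma>" using q2 x by (simp add: quasigroup2_def bij_betw_def)
    ultimately show False using \<open>y \<noteq> y'\<close> y y' by (metis inj_onD)
  qed
next
  have sub: "S \<subseteq> \<Sigma> \<times> \<Sigma>" and img: "(\<lambda>(x, y). f x y) ` S = {a, b}"
    and q2: "quasigroup2 \<Sigma> (switch_on S a b f)" using c unfolding is_component_def by auto
  fix x x' y assume xy: "(x,y)\<in>S" and x': "x'\<in>\<Sigma>" and v: "f x' y \<in> {a,b}"
  show "(x',y)\<in>S"
  proof (rule ccontr)
    assume n: "(x',y) \<notin> S"
    have x: "x\<in>\<Sigma>" and y: "y \<in> \<Sigma>" using xy sub by auto
    have fy: "f x y \<in> {a,b}" using img xy by force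
    have "x \<noteq> x'" using n xy by auto
    moreover have "inj_on (\<lambda>x. f x y) \<Sigma>" using q y by (simp add: quasigroup2_def bij_betw_def)
    ultimately have "f x y \<noteq> f x' y" using x x' by (metis (mono_tags) inj_onD)
    hence "switch_on S a b f x y = switch_on S a b f x' y"
      using fy v xy n by (auto simp: switch_on_def)
    moreover have "inj_on (\<lambda>x. switch_on S a b f x y) \<Sigma>" using q2 y by (simp add: quasigroup2_def bij_betw_def)
    ultimately show False using \<open>x \<noteq> x'\<close> x x' by (metis (mono_tags) inj_onD)
  qed
qed

lemma G3:
  assumes q: "quasigroup2 \<Sigma> f" and ab: "a \<noteq> b" and C: "is_component \<Sigma> f a b C"
    and conn: "\<And>S. rc_closed \<Sigma> f a b S \<Longrightarrow> S \<inter> C \<noteq> {} \<Longrightarrow> C \<subseteq> S"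
  shows "is_min_component \<Sigma> f a b C"
    and "\<And>S. is_min_component \<Sigma> f a b S \<Longrightarrow> S \<inter> C \<noteq> {} \<Longrightarrow> S = C"
proof -
  show "is_min_component \<Sigma> f a b C"
    unfolding is_min_component_def
  proof (intro conjI allI impI C notI)
    fix T assume T: "T \<subset> C" "is_component \<Sigma> f a b T"
    have "T \<noteq> {}" using T(2) unfolding is_component_def by auto
    hence "T \<inter> C \<noteq> {}" using T(1) by auto
    hence "C \<subseteq> T" using conn G2[OF q ab T(2)] by blast
    thus False using T(1) by auto
  qed
next
  fix S assume S: "is_min_component \<Sigma> f a b S" "S \<inter> C \<noteq> {}"
  have Sc: "is_component \<Sigma> f a b S" using S unfolding is_min_component_def by auto
  have "C \<subseteq> S" using conn G2[OF q ab Sc] S(2) by blast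
  moreover have "\<not> C \<subset> S" using S C unfolding is_min_component_def by blast
  ultimately show "S = C" by blast
qed

lemma G4:
  assumes q: "quasigroup2 \<Sigma> f" and a: "a \<in> \<Sigma>" "b \<in> \<Sigma>" and sub: "C \<subseteq> \<Sigma> \<times> \<Sigma>"
    and img: "(\<lambda>(x, y). f x y) ` C = {a, b}" and cl: "rc_closed \<Sigma> f a b C"
  shows "is_component \<Sigma> f a b C"
  using G1[OF q a cl] sub img unfolding is_component_def by blast




lemma eq2: "e < 2 \<Longrightarrow> e' < 2 \<Longrightarrow> (2*a + e = 2*a' + (e'::nat)) \<longleftrightarrow> a = a' \<and> e = e'"
  by arith
lemma lt2m: "a < m \<Longrightarrow> e < 2 \<Longrightarrow> 2*a + e < 2*(m::nat)"
  by arith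

locale cons =
  fixes m :: nat and L :: "nat\<Rightarrow>nat\<Rightarrow>nat" and c ci s :: "nat\<Rightarrow>nat"
  assumes m1: "m \<ge> 1"
  and Lrow: "\<And>j. j<m \<Longrightarrow> bij_betw (L j) {..<m} {..<m}"
  and Lcol: "\<And>l. l<m \<Longrightarrow> bij_betw (\<lambda>j. L j l) {..<m} {..<m}"
  and c_lt: "\<And>j. j<m \<Longrightarrow> c j < m" and ci_lt: "\<And>l. l<m \<Longrightarrow> ci l < m"
  and c_ci: "\<And>l. l<m \<Longrightarrow> c (ci l) = l" and ci_c: "\<And>j. j<m \<Longrightarrow> ci (c j) = j"
  and s_bij: "bij_betw s {..<m} {..<m}"
  and Ls: "\<And>j. j<m \<Longrightarrow> L j (c j) = s j"
begin

lemma L_lt: "j<m \<Longrightarrow> l<m \<Longrightarrow> L j l < m"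
  using Lrow bij_betwE by blast
lemma L_inj_row: "j<m \<Longrightarrow> l<m \<Longrightarrow> l'<m \<Longrightarrow> L j l = L j l' \<Longrightarrow> l = l'"
  using Lrow[of j] unfolding bij_betw_def inj_on_def by blast
lemma L_inj_col: "l<m \<Longrightarrow> j<m \<Longrightarrow> j'<m \<Longrightarrow> L j l = L j' l \<Longrightarrow> j = j'"
  using Lcol[of l] unfolding bij_betw_def inj_on_def by blast
lemma L_surj: "j<m \<Longrightarrow> p<m \<Longrightarrow> \<exists>l<m. L j l = p"
  using Lrow[of j] unfolding bij_betw_def by (metis imageE lessThan_iff)
lemma s_lt: "j<m \<Longrightarrow> s j < m"
  using s_bij bij_betwE by blast
lemma s_inj: "j<m \<Longrightarrow> j'<m \<Longrightarrow> s j = s j' \<Longrightarrow> j = j'"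
  using s_bij unfolding bij_betw_def inj_on_def by blast
lemma s_surj: "p<m \<Longrightarrow> \<exists>j<m. s j = p"
  using s_bij unfolding bij_betw_def by (metis imageE lessThan_iff)
lemma L_ne_s: "j<m \<Longrightarrow> l<m \<Longrightarrow> l \<noteq> c j \<Longrightarrow> L j l \<noteq> s j"
  using L_inj_row[of j l "c j"] c_lt Ls by metis
lemma L_ne_s': "j<m \<Longrightarrow> l<m \<Longrightarrow> l \<noteq> c j \<Longrightarrow> L j l \<noteq> s (ci l)"
  using L_inj_col[of l j "ci l"] ci_lt c_ci Ls by metis

definition psi :: "nat \<Rightarrow> nat \<Rightarrow> nat" where
  "psi x y =
    (if x = 2*m then (if y = 2*m then 2*m else 2 * s (ci (y div 2)) + y mod 2)
     else if y = 2*m then 2 * s (x div 2) + (1 - x mod 2)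
     else if y div 2 = c (x div 2) then (if x mod 2 = y mod 2 then 2*m else 2 * s (x div 2) + x mod 2)
     else 2 * L (x div 2) (y div 2) + (x + y) mod 2)"

lemma div2_lt: "x < 2*m \<Longrightarrow> x div 2 < m" by arith

lemma psi_le: "x \<le> 2*m \<Longrightarrow> y \<le> 2*m \<Longrightarrow> psi x y \<le> 2*m"
proof -
  assume x: "x \<le> 2*m" and y: "y \<le> 2*m"
  show ?thesis
    using x y lt2m[OF s_lt[OF ci_lt[OF div2_lt[of y]]], of "y mod 2"]
      lt2m[OF s_lt[OF div2_lt[of x]], of "1 - x mod 2"]
      lt2m[OF s_lt[OF div2_lt[of x]], of "x mod 2"]
      lt2m[OF L_lt[OF div2_lt[of x] div2_lt[of y]], of "(x+y) mod 2"]
    unfolding psi_def by (auto simp: le_less)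
qed

lemma xdecomp: "x = 2*(x div 2) + x mod (2::nat)" by arith

lemma row_inj: assumes x: "x \<le> 2*m" and y1: "y1 \<le> 2*m" and y2: "y2 \<le> 2*m" and e: "psi x y1 = psi x y2"
  shows "y1 = y2"
proof (cases "x = 2*m")
  case True
  show ?thesis
  proof (cases "y1 = 2*m \<or> y2 = 2*m")
    case True
    thus ?thesis using e \<open>x = 2*m\<close> y1 y2
      lt2m[OF s_lt[OF ci_lt[OF div2_lt[of y1]]], of "y1 mod 2"]
      lt2m[OF s_lt[OF ci_lt[OF div2_lt[of y2]]], of "y2 mod 2"]
      unfolding psi_def by (auto simp: le_less)
  next
    case False
    hence "s (ci (y1 div 2)) = s (ci (y2 div 2)) \<and> y1 mod 2 = y2 mod 2"
      using e \<open>x = 2*m\<close> unfolding psi_def by (simp add: eq2)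
    hence "y1 div 2 = y2 div 2 \<and> y1 mod 2 = y2 mod 2"
      using s_inj ci_lt c_ci div2_lt False y1 y2 by (metis le_less)
    thus ?thesis by (metis xdecomp)
  qed
next
  case False
  define j where "j = x div 2"
  have j: "j < m" using False x div2_lt j_def by auto
  have x2: "x < 2*m" using x False by auto
  have r: "x mod 2 < 2" by simp
  have sj: "s j < m" using s_lt j .
  have key: "\<And>y. y \<le> 2*m \<Longrightarrow>
      (y = 2*m \<and> psi x y = 2 * s j + (1 - x mod 2)) \<or>
      (y < 2*m \<and> y div 2 = c j \<and> y mod 2 = x mod 2 \<and> psi x y = 2*m) \<or>
      (y < 2*m \<and> y div 2 = c j \<and> y mod 2 \<noteq> x mod 2 \<and> psi x y = 2 * s j + x mod 2) \<or>
      (y < 2*m \<and> y div 2 \<noteq> c j \<and> y div 2 < m \<and> psi x y = 2 * L j (y div 2) + (x+y) mod 2)"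
    using False unfolding psi_def j_def by (auto simp: le_less div2_lt)
  have A: "2 * s j + (1 - x mod 2) < 2*m" by (rule lt2m[OF sj]) simp
  have B: "2 * s j + x mod 2 < 2*m" by (rule lt2m[OF sj]) simp
  have C: "\<And>y. y div 2 < m \<Longrightarrow> 2 * L j (y div 2) + (x+y) mod 2 < 2*m"
    by (rule lt2m[OF L_lt[OF j]]) simp_all
  have D: "\<And>y. y div 2 < m \<Longrightarrow> y div 2 \<noteq> c j \<Longrightarrow> L j (y div 2) \<noteq> s j"
    using L_ne_s j by blast
  have E: "\<And>y y'. y div 2 < m \<Longrightarrow> y' div 2 < m \<Longrightarrow> L j (y div 2) = L j (y' div 2) \<Longrightarrow> y div 2 = y' div 2"
    using L_inj_row j by blast
  have F: "\<And>y y'. (x+y) mod 2 = (x+y') mod 2 \<Longrightarrow> y mod 2 = y' mod (2::nat)" by presburger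
  have G: "\<And>y y'. y div 2 = y' div 2 \<Longrightarrow> y mod 2 = y' mod 2 \<Longrightarrow> y = (y'::nat)" by (metis xdecomp)
  have H: "\<And>y. y mod 2 \<noteq> x mod 2 \<Longrightarrow> x mod 2 = 1 - y mod (2::nat)" by presburger
  have dm: "\<And>a e. e < 2 \<Longrightarrow> (2*a+e) div 2 = a \<and> (2*a+e) mod 2 = (e::nat)" by arith
  have i: "\<And>y. y \<le> 2*m \<Longrightarrow> psi x y = 2*m \<Longrightarrow> y div 2 = c j \<and> y mod 2 = x mod 2"
  proof -
    fix y assume y: "y \<le> 2*m" and v: "psi x y = 2*m"
    show "y div 2 = c j \<and> y mod 2 = x mod 2"
      using key[OF y] v A B C[of y] by auto
  qed
  have ii: "\<And>y. y \<le> 2*m \<Longrightarrow> psi x y \<noteq> 2*m \<Longrightarrow> psi x y div 2 = s j \<Longrightarrow>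
      (y = 2*m \<and> psi x y mod 2 = 1 - x mod 2) \<or> (y div 2 = c j \<and> y mod 2 \<noteq> x mod 2 \<and> psi x y mod 2 = x mod 2)"
  proof -
    fix y assume y: "y \<le> 2*m" and v: "psi x y \<noteq> 2*m" and p: "psi x y div 2 = s j"
    from key[OF y] show "?thesis y"
    proof (elim disjE conjE)
      assume "y div 2 \<noteq> c j" "y div 2 < m" and w: "psi x y = 2 * L j (y div 2) + (x + y) mod 2"
      hence "psi x y div 2 = L j (y div 2)" using dm[of "(x + y) mod 2"] by simp
      thus ?thesis using p D[OF \<open>y div 2 < m\<close> \<open>y div 2 \<noteq> c j\<close>] by simp
    next
      assume "y = 2*m" and w: "psi x y = 2 * s j + (1 - x mod 2)"
      have "(2 * s j + (1 - x mod 2)) mod 2 = 1 - x mod 2" by (rule dm[THEN conjunct2]) simp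
      thus ?thesis using w \<open>y = 2*m\<close> by simp
    next
      assume "y div 2 = c j" "y mod 2 \<noteq> x mod 2" and w: "psi x y = 2 * s j + x mod 2"
      have "(2 * s j + x mod 2) mod 2 = x mod 2" by (rule dm[THEN conjunct2]) simp
      thus ?thesis using w \<open>y div 2 = c j\<close> \<open>y mod 2 \<noteq> x mod 2\<close> by simp
    qed (use v in auto)
  qed
  have iii: "\<And>y. y \<le> 2*m \<Longrightarrow> psi x y \<noteq> 2*m \<Longrightarrow> psi x y div 2 \<noteq> s j \<Longrightarrow>
      y div 2 < m \<and> L j (y div 2) = psi x y div 2 \<and> (x+y) mod 2 = psi x y mod 2"
  proof -
    fix y assume y: "y \<le> 2*m" and v: "psi x y \<noteq> 2*m" and p: "psi x y div 2 \<noteq> s j"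
    from key[OF y] show "?thesis y"
    proof (elim disjE conjE)
      assume "y div 2 \<noteq> c j" "y div 2 < m" and w: "psi x y = 2 * L j (y div 2) + (x + y) mod 2"
      thus ?thesis using dm[of "(x + y) mod 2" "L j (y div 2)"] by simp
    qed (use v p dm in auto)
  qed
  show ?thesis
  proof (cases "psi x y1 = 2*m")
    case True
    thus ?thesis using i[OF y1] i[OF y2] e G by metis
  next
    case nm: False
    show ?thesis
    proof (cases "psi x y1 div 2 = s j")
      case True
      have "psi x y2 div 2 = s j" using True e by simp
      have nm2: "psi x y2 \<noteq> 2*m" using nm e by simp
      have r01: "x mod 2 = 0 \<or> x mod 2 = 1" "y1 mod 2 = 0 \<or> y1 mod 2 = 1" "y2 mod 2 = 0 \<or> y2 mod 2 = 1" by auto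
      from ii[OF y1 nm True] ii[OF y2 nm2 \<open>psi x y2 div 2 = s j\<close>] show ?thesis
      proof (elim disjE conjE)
        assume "y1 div 2 = c j" "y1 mod 2 \<noteq> x mod 2" "y2 div 2 = c j" "y2 mod 2 \<noteq> x mod 2"
        thus ?thesis using r01 G[of y1 y2] by auto
      next
        assume a: "y1 = 2*m" "psi x y1 mod 2 = 1 - x mod 2" "y2 div 2 = c j" "psi x y2 mod 2 = x mod 2"
        hence "1 - x mod 2 = x mod (2::nat)" using e by metis
        thus ?thesis by presburger
      next
        assume a: "y2 = 2*m" "psi x y2 mod 2 = 1 - x mod 2" "y1 div 2 = c j" "psi x y1 mod 2 = x mod 2"
        hence "1 - x mod 2 = x mod (2::nat)" using e by metis
        thus ?thesis by presburger
      next
        assume "y1 = 2*m" "y2 = 2*m" thus ?thesis by simp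
      qed
    next
      case False
      thus ?thesis using iii[OF y1 nm False] iii[OF y2] nm e E F G by metis
    qed
  qed
qed

lemma col_inj: assumes y: "y \<le> 2*m" and x1: "x1 \<le> 2*m" and x2: "x2 \<le> 2*m" and e: "psi x1 y = psi x2 y"
  shows "x1 = x2"
proof (cases "y = 2*m")
  case True
  show ?thesis
  proof (cases "x1 = 2*m \<or> x2 = 2*m")
    case True
    thus ?thesis using e \<open>y = 2*m\<close> x1 x2
      lt2m[OF s_lt[OF div2_lt[of x1]], of "1 - x1 mod 2"]
      lt2m[OF s_lt[OF div2_lt[of x2]], of "1 - x2 mod 2"]
      unfolding psi_def by (auto simp: le_less) (smt (verit) diff_less_Suc One_nat_def numeral_2_eq_2 le_less)+
  next
    case False
    hence eq: "2 * s (x1 div 2) + (1 - x1 mod 2) = 2 * s (x2 div 2) + (1 - x2 mod 2)"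
      using e \<open>y = 2*m\<close> unfolding psi_def by simp
    have p1: "1 - x1 mod 2 < (2::nat)" and p2: "1 - x2 mod 2 < (2::nat)" by simp_all
    have "s (x1 div 2) = s (x2 div 2) \<and> 1 - x1 mod 2 = 1 - x2 mod 2"
      using eq2[OF p1 p2] eq by blast
    hence h: "s (x1 div 2) = s (x2 div 2)" "1 - x1 mod 2 = 1 - x2 mod (2::nat)" by auto
    have "x1 < 2*m" "x2 < 2*m" using False x1 x2 by auto
    hence "x1 div 2 = x2 div 2" using s_inj[OF div2_lt div2_lt h(1)] by blast
    moreover have "x1 mod 2 = x2 mod 2" using h(2) by presburger
    ultimately have "x1 div 2 = x2 div 2 \<and> x1 mod 2 = x2 mod 2" by blast
    thus ?thesis by (metis xdecomp)
  qed
next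
  case False
  define l where "l = y div 2"
  have l: "l < m" using False y div2_lt l_def by auto
  define j0 where "j0 = ci l"
  have j0: "j0 < m" using ci_lt l j0_def by auto
  have sj: "s j0 < m" using s_lt j0 .
  have cnd: "\<And>x. x < 2*m \<Longrightarrow> (l = c (x div 2)) = (x div 2 = j0)"
    using ci_c c_ci div2_lt l unfolding j0_def by metis
  have key: "\<And>x. x \<le> 2*m \<Longrightarrow>
      (x = 2*m \<and> psi x y = 2 * s j0 + y mod 2) \<or>
      (x < 2*m \<and> x div 2 = j0 \<and> x mod 2 = y mod 2 \<and> psi x y = 2*m) \<or>
      (x < 2*m \<and> x div 2 = j0 \<and> x mod 2 \<noteq> y mod 2 \<and> psi x y = 2 * s j0 + x mod 2) \<or>
      (x < 2*m \<and> x div 2 \<noteq> j0 \<and> x div 2 < m \<and> psi x y = 2 * L (x div 2) l + (x+y) mod 2)"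
  proof -
    fix x assume x: "x \<le> 2*m"
    show "?thesis x"
    proof (cases "x = 2*m")
      case True thus ?thesis using False unfolding psi_def j0_def l_def by simp
    next
      case xF: False
      hence x2: "x < 2*m" using x by simp
      show ?thesis using False xF cnd[OF x2] div2_lt[OF x2] unfolding psi_def l_def[symmetric] j0_def[symmetric]
        by auto
    qed
  qed
  have A: "2 * s j0 + y mod 2 < 2*m" by (rule lt2m[OF sj]) simp
  have B: "\<And>x. 2 * s j0 + x mod 2 < 2*m" by (rule lt2m[OF sj]) simp
  have C: "\<And>x. x div 2 < m \<Longrightarrow> 2 * L (x div 2) l + (x+y) mod 2 < 2*m"
    by (rule lt2m[OF L_lt[OF _ l]]) simp_all
  have D: "\<And>x. x div 2 < m \<Longrightarrow> x div 2 \<noteq> j0 \<Longrightarrow> L (x div 2) l \<noteq> s j0"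
  proof -
    fix x assume a: "x div 2 < m" and b: "x div 2 \<noteq> j0"
    have "l \<noteq> c (x div 2)" using b ci_c[OF a] unfolding j0_def by auto
    thus "L (x div 2) l \<noteq> s j0" using L_ne_s'[OF a l] unfolding j0_def by simp
  qed
  have E: "\<And>x x'. x div 2 < m \<Longrightarrow> x' div 2 < m \<Longrightarrow> L (x div 2) l = L (x' div 2) l \<Longrightarrow> x div 2 = x' div 2"
    using L_inj_col l by blast
  have F: "\<And>x x'. (x+y) mod 2 = (x'+y) mod 2 \<Longrightarrow> x mod 2 = x' mod (2::nat)" by presburger
  have G: "\<And>x x'. x div 2 = x' div 2 \<Longrightarrow> x mod 2 = x' mod 2 \<Longrightarrow> x = (x'::nat)" by (metis xdecomp)
  have dm: "\<And>a e. e < 2 \<Longrightarrow> (2*a+e) div 2 = a \<and> (2*a+e) mod 2 = (e::nat)" by arith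
  have i: "\<And>x. x \<le> 2*m \<Longrightarrow> psi x y = 2*m \<Longrightarrow> x div 2 = j0 \<and> x mod 2 = y mod 2"
  proof -
    fix x assume x: "x \<le> 2*m" and v: "psi x y = 2*m"
    show "x div 2 = j0 \<and> x mod 2 = y mod 2"
      using key[OF x] v A B[of x] C[of x] by auto
  qed
  have ii: "\<And>x. x \<le> 2*m \<Longrightarrow> psi x y \<noteq> 2*m \<Longrightarrow> psi x y div 2 = s j0 \<Longrightarrow>
      (x = 2*m \<and> psi x y mod 2 = y mod 2) \<or> (x div 2 = j0 \<and> x mod 2 \<noteq> y mod 2 \<and> psi x y mod 2 = x mod 2)"
  proof -
    fix x assume x: "x \<le> 2*m" and v: "psi x y \<noteq> 2*m" and p: "psi x y div 2 = s j0"
    from key[OF x] show "?thesis x"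
    proof (elim disjE conjE)
      assume "x div 2 \<noteq> j0" "x div 2 < m" and w: "psi x y = 2 * L (x div 2) l + (x + y) mod 2"
      hence "psi x y div 2 = L (x div 2) l" using dm[of "(x + y) mod 2"] by simp
      thus ?thesis using p D[OF \<open>x div 2 < m\<close> \<open>x div 2 \<noteq> j0\<close>] by simp
    next
      assume "x = 2*m" and w: "psi x y = 2 * s j0 + y mod 2"
      have "(2 * s j0 + y mod 2) mod 2 = y mod 2" by (rule dm[THEN conjunct2]) simp
      thus ?thesis using w \<open>x = 2*m\<close> by simp
    next
      assume "x div 2 = j0" "x mod 2 \<noteq> y mod 2" and w: "psi x y = 2 * s j0 + x mod 2"
      have "(2 * s j0 + x mod 2) mod 2 = x mod 2" by (rule dm[THEN conjunct2]) simp
      thus ?thesis using w \<open>x div 2 = j0\<close> \<open>x mod 2 \<noteq> y mod 2\<close> by simp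
    qed (use v in auto)
  qed
  have iii: "\<And>x. x \<le> 2*m \<Longrightarrow> psi x y \<noteq> 2*m \<Longrightarrow> psi x y div 2 \<noteq> s j0 \<Longrightarrow>
      x div 2 < m \<and> L (x div 2) l = psi x y div 2 \<and> (x+y) mod 2 = psi x y mod 2"
  proof -
    fix x assume x: "x \<le> 2*m" and v: "psi x y \<noteq> 2*m" and p: "psi x y div 2 \<noteq> s j0"
    from key[OF x] show "?thesis x"
    proof (elim disjE conjE)
      assume "x div 2 \<noteq> j0" "x div 2 < m" and w: "psi x y = 2 * L (x div 2) l + (x + y) mod 2"
      thus ?thesis using dm[of "(x + y) mod 2" "L (x div 2) l"] by simp
    qed (use v p dm in auto)
  qed
  show ?thesis
  proof (cases "psi x1 y = 2*m")
    case True
    thus ?thesis using i[OF x1] i[OF x2] e G[of x1 x2] by metis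
  next
    case nm: False
    show ?thesis
    proof (cases "psi x1 y div 2 = s j0")
      case True
      have "psi x2 y div 2 = s j0" using True e by simp
      have nm2: "psi x2 y \<noteq> 2*m" using nm e by simp
      have r01: "y mod 2 = 0 \<or> y mod 2 = 1" "x1 mod 2 = 0 \<or> x1 mod 2 = 1" "x2 mod 2 = 0 \<or> x2 mod 2 = 1" by auto
      from ii[OF x1 nm True] ii[OF x2 nm2 \<open>psi x2 y div 2 = s j0\<close>] show ?thesis
      proof (elim disjE conjE)
        assume "x1 div 2 = j0" "x1 mod 2 \<noteq> y mod 2" "x2 div 2 = j0" "x2 mod 2 \<noteq> y mod 2"
        thus ?thesis using r01 G[of x1 x2] by auto
      next
        assume a: "x1 = 2*m" "psi x1 y mod 2 = y mod 2" "x2 div 2 = j0" "x2 mod 2 \<noteq> y mod 2" "psi x2 y mod 2 = x2 mod 2"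
        hence "y mod 2 = x2 mod (2::nat)" using e by metis
        thus ?thesis using a by simp
      next
        assume a: "x2 = 2*m" "psi x2 y mod 2 = y mod 2" "x1 div 2 = j0" "x1 mod 2 \<noteq> y mod 2" "psi x1 y mod 2 = x1 mod 2"
        hence "y mod 2 = x1 mod (2::nat)" using e by metis
        thus ?thesis using a by simp
      next
        assume "x1 = 2*m" "x2 = 2*m" thus ?thesis by simp
      qed
    next
      case False
      thus ?thesis using iii[OF x1 nm False] iii[OF x2] nm e E[of x1 x2] F[of x1 x2] G[of x1 x2] by metis
    qed
  qed
qed

lemma psi_quasi: "quasigroup2 {0..2*m} psi"
  unfolding quasigroup2_def
proof (intro conjI ballI)
  fix x assume x: "x \<in> {0..2*m}"
  have inj: "inj_on (psi x) {0..2*m}" using row_inj x by (auto simp: inj_on_def)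
  have sub: "psi x ` {0..2*m} \<subseteq> {0..2*m}" using psi_le x by auto
  show "bij_betw (\<lambda>y. psi x y) {0..2*m} {0..2*m}"
    using endo_inj_surj[OF _ sub inj] inj unfolding bij_betw_def by simp
next
  fix y assume y: "y \<in> {0..2*m}"
  have inj: "inj_on (\<lambda>x. psi x y) {0..2*m}" using col_inj y by (auto simp: inj_on_def)
  have sub: "(\<lambda>x. psi x y) ` {0..2*m} \<subseteq> {0..2*m}" using psi_le y by auto
  show "bij_betw (\<lambda>x. psi x y) {0..2*m} {0..2*m}"
    using endo_inj_surj[OF _ sub inj] inj unfolding bij_betw_def by simp
qed

lemma pair_iff: "(v::nat) \<in> {2*i, 2*i+1} \<longleftrightarrow> v div 2 = i" by auto

lemma dm: "e < 2 \<Longrightarrow> (2*a+e) div 2 = a \<and> (2*a+e) mod 2 = (e::nat)" by arith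

lemma psi_div: assumes x: "x \<le> 2*m" and y: "y \<le> 2*m"
  shows "psi x y div 2 = (if x = 2*m then (if y = 2*m then m else s (ci (y div 2)))
     else if y = 2*m then s (x div 2)
     else if y div 2 = c (x div 2) then (if x mod 2 = y mod 2 then m else s (x div 2))
     else L (x div 2) (y div 2))"
proof -
  have a: "(2 * s (ci (y div 2)) + y mod 2) div 2 = s (ci (y div 2))" by (rule dm[THEN conjunct1]) simp
  have b: "(2 * s (x div 2) + (1 - x mod 2)) div 2 = s (x div 2)" by (rule dm[THEN conjunct1]) simp
  have c: "(2 * s (x div 2) + x mod 2) div 2 = s (x div 2)" by (rule dm[THEN conjunct1]) simp
  have d: "(2 * L (x div 2) (y div 2) + (x + y) mod 2) div 2 = L (x div 2) (y div 2)" by (rule dm[THEN conjunct1]) simp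
  show ?thesis
    by (cases "x = 2*m"; cases "y = 2*m"; cases "y div 2 = c (x div 2)"; cases "x mod 2 = y mod 2")
       (simp_all only: psi_def if_True if_False a b c d, simp_all)
qed

lemma mem_blk: "((x::nat),(y::nat)) \<in> {2*j, 2*j+1} \<times> {2*l, 2*l+1} \<longleftrightarrow> x div 2 = j \<and> y div 2 = l"
  by auto

end

locale comp = cons +
  fixes i :: nat
  assumes i: "i < m"
begin

definition j0 where "j0 = (SOME j. j<m \<and> s j = i)"
lemma j0: "j0 < m" "s j0 = i"
  using someI_ex[OF s_surj[OF i]] unfolding j0_def by auto

definition lf where "lf j = (SOME l. l<m \<and> L j l = i)"
lemma lf: "j < m \<Longrightarrow> lf j < m \<and> L j (lf j) = i"
  using someI_ex[OF L_surj[OF _ i]] unfolding lf_def by auto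

lemma lf_ne: "j < m \<Longrightarrow> j \<noteq> j0 \<Longrightarrow> lf j \<noteq> c j"
  using lf[of j] Ls[of j] j0 s_inj[of j j0] by auto

lemma lf_ne_c0: "j < m \<Longrightarrow> j \<noteq> j0 \<Longrightarrow> lf j \<noteq> c j0"
proof
  assume a: "j < m" "j \<noteq> j0" "lf j = c j0"
  have "L j (c j0) = L j0 (c j0)" using lf[OF a(1)] a(3) Ls[OF j0(1)] j0(2) by simp
  thus False using L_inj_col[OF c_lt[OF j0(1)] a(1) j0(1)] a(2) by simp
qed

lemma lf_inj: "j < m \<Longrightarrow> j' < m \<Longrightarrow> lf j = lf j' \<Longrightarrow> j = j'"
  using lf[of j] lf[of j'] L_inj_col[of "lf j" j j'] by auto

definition c0 where "c0 = c j0"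
lemma c0: "c0 < m" using c_lt j0 unfolding c0_def by auto

definition S0 :: "(nat \<times> nat) set" where
  "S0 = {(2*j0, 2*c0+1), (2*j0+1, 2*c0), (2*j0, 2*m), (2*j0+1, 2*m), (2*m, 2*c0), (2*m, 2*c0+1)}"

definition Bk :: "nat \<Rightarrow> (nat \<times> nat) set" where
  "Bk j = {2*j, 2*j+1} \<times> {2 * lf j, 2 * lf j + 1}"

lemma classify: assumes x: "x \<le> 2*m" and y: "y \<le> 2*m" and v: "psi x y div 2 = i"
  shows "(x,y) \<in> S0 \<or> (\<exists>j<m. j \<noteq> j0 \<and> x div 2 = j \<and> y div 2 = lf j)"
proof -
  have dd: "\<And>z k. (z::nat) div 2 = k \<Longrightarrow> (z = 2*k \<and> z mod 2 = 0) \<or> (z = 2*k+1 \<and> z mod 2 = 1)" by arith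
  note pd = psi_div[OF x y]
  show ?thesis
  proof (cases "x = 2*m")
    case xm: True
    show ?thesis
    proof (cases "y = 2*m")
      case True thus ?thesis using v pd xm i by simp
    next
      case False
      hence y2: "y < 2*m" using y by simp
      have "s (ci (y div 2)) = i" using v pd xm False by simp
      hence "ci (y div 2) = j0" using s_inj[OF ci_lt[OF div2_lt[OF y2]] j0(1)] j0(2) by simp
      hence "y div 2 = c0" using c_ci[OF div2_lt[OF y2]] unfolding c0_def by simp
      hence "(x,y) \<in> S0" using dd[of y c0] xm unfolding S0_def by auto
      thus ?thesis by simp
    qed
  next
    case xF: False
    hence x2: "x < 2*m" using x by simp
    have xj: "x div 2 < m" using div2_lt[OF x2] .
    show ?thesis
    proof (cases "y = 2*m")
      case True
      have "s (x div 2) = i" using v pd xF True by simp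
      hence "x div 2 = j0" using s_inj[OF xj j0(1)] j0(2) by simp
      hence "(x,y) \<in> S0" using dd[of x j0] True unfolding S0_def by auto
      thus ?thesis by simp
    next
      case yF: False
      hence y2: "y < 2*m" using y by simp
      have yl: "y div 2 < m" using div2_lt[OF y2] .
      show ?thesis
      proof (cases "y div 2 = c (x div 2)")
        case True
        have "x mod 2 \<noteq> y mod 2" using v pd xF yF True i by auto
        moreover have "s (x div 2) = i" using v pd xF yF True i by (auto split: if_splits)
        hence "x div 2 = j0" using s_inj[OF xj j0(1)] j0(2) by simp
        moreover have "y div 2 = c0" using True \<open>x div 2 = j0\<close> unfolding c0_def by simp
        ultimately have "(x,y) \<in> S0" using dd[of x j0] dd[of y c0] unfolding S0_def by auto
        thus ?thesis by simp
      next
        case False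
        have Lv: "L (x div 2) (y div 2) = i" using v pd xF yF False by simp
        have ne: "x div 2 \<noteq> j0"
        proof
          assume "x div 2 = j0"
          hence "L j0 (y div 2) = L j0 (c j0)" using Lv Ls[OF j0(1)] j0(2) by simp
          hence "y div 2 = c j0" using L_inj_row[OF j0(1) yl c_lt[OF j0(1)]] by simp
          thus False using False \<open>x div 2 = j0\<close> by simp
        qed
        have "y div 2 = lf (x div 2)" using lf[OF xj] Lv L_inj_row[OF xj yl, of "lf (x div 2)"] by simp
        thus ?thesis using ne xj by blast
      qed
    qed
  qed
qed

lemma S0_div: "(x,y) \<in> S0 \<Longrightarrow> (x div 2 = j0 \<or> x div 2 = m) \<and> (y div 2 = c0 \<or> y div 2 = m)"
  unfolding S0_def by auto

lemma S0_le: "(x,y) \<in> S0 \<Longrightarrow> x \<le> 2*m \<and> y \<le> 2*m"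
  using j0 c0 unfolding S0_def by auto

lemma v1: "psi (2*j0) (2*c0+1) = 2*i" using j0 c0 unfolding psi_def c0_def by simp
lemma v2: "psi (2*j0+1) (2*c0) = 2*i+1" using j0 c0 unfolding psi_def c0_def by simp
lemma v3: "psi (2*j0) (2*m) = 2*i+1" using j0 c0 unfolding psi_def c0_def by simp
lemma v4: "psi (2*j0+1) (2*m) = 2*i" using j0 c0 unfolding psi_def c0_def by simp
lemma v5: "psi (2*m) (2*c0) = 2*i" using j0 c0 ci_c[OF j0(1)] unfolding psi_def c0_def by simp
lemma v6: "psi (2*m) (2*c0+1) = 2*i+1" using j0 c0 ci_c[OF j0(1)] unfolding psi_def c0_def by simp

lemma S0_val: "(x,y) \<in> S0 \<Longrightarrow> psi x y \<in> {2*i, 2*i+1}"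
  unfolding S0_def using v1 v2 v3 v4 v5 v6 by auto

lemma S0_img: "(\<lambda>(x, y). psi x y) ` S0 = {2*i, 2*i+1}"
proof
  show "(\<lambda>(x, y). psi x y) ` S0 \<subseteq> {2*i, 2*i+1}" using S0_val by auto
  have "(2*j0, 2*c0+1) \<in> S0" "(2*j0, 2*m) \<in> S0" unfolding S0_def by auto
  thus "{2*i, 2*i+1} \<subseteq> (\<lambda>(x, y). psi x y) ` S0" using v1 v3
    by (metis (no_types, lifting) case_prod_conv empty_subsetI image_eqI insert_subset)
qed

lemma Bk_val: "j < m \<Longrightarrow> j \<noteq> j0 \<Longrightarrow> x div 2 = j \<Longrightarrow> y div 2 = lf j \<Longrightarrow> psi x y div 2 = i"
proof -
  assume a: "j < m" "j \<noteq> j0" "x div 2 = j" "y div 2 = lf j"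
  have x: "x < 2*m" "x \<le> 2*m" using a by auto
  have y: "y < 2*m" "y \<le> 2*m" using a lf[OF a(1)] by auto
  show ?thesis using psi_div[OF x(2) y(2)] x y a lf[OF a(1)] lf_ne[OF a(1,2)] by simp
qed

lemma Bk_le: "j < m \<Longrightarrow> (x,y) \<in> Bk j \<Longrightarrow> x \<le> 2*m \<and> y \<le> 2*m"
  using lf[of j] unfolding Bk_def by auto

lemma Bk_img: assumes a: "j < m" "j \<noteq> j0" shows "(\<lambda>(x, y). psi x y) ` Bk j = {2*i, 2*i+1}"
proof
  have h: "\<And>x y. (x,y) \<in> Bk j \<Longrightarrow> psi x y \<in> {2*i,2*i+1}"
  proof -
    fix x y assume "(x,y) \<in> Bk j"
    hence "x div 2 = j \<and> y div 2 = lf j" unfolding Bk_def by (rule mem_blk[THEN iffD1])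
    hence "psi x y div 2 = i" using Bk_val[OF a] by blast
    thus "psi x y \<in> {2*i,2*i+1}" using pair_iff by blast
  qed
  thus "(\<lambda>(x, y). psi x y) ` Bk j \<subseteq> {2*i, 2*i+1}" by auto
  have l: "lf j < m" "lf j \<noteq> c j" using lf[OF a(1)] lf_ne[OF a] by auto
  have w1: "psi (2*j) (2 * lf j) = 2*i" using a l lf[OF a(1)] unfolding psi_def by simp
  have w2: "psi (2*j) (2 * lf j + 1) = 2*i+1" using a l lf[OF a(1)] unfolding psi_def by simp
  have "(2*j, 2 * lf j) \<in> Bk j" "(2*j, 2 * lf j + 1) \<in> Bk j" unfolding Bk_def by auto
  thus "{2*i, 2*i+1} \<subseteq> (\<lambda>(x, y). psi x y) ` Bk j" using w1 w2
    by (metis (no_types, lifting) case_prod_conv empty_subsetI image_eqI insert_subset)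
qed

lemma val_div: "psi x y \<in> {2*i, 2*i+1} \<Longrightarrow> psi x y div 2 = i"
  using pair_iff by blast

lemma S0_closed: "rc_closed {0..2*m} psi (2*i) (2*i+1) S0"
  unfolding rc_closed_def
proof (intro conjI allI impI)
  fix x y y' assume a: "(x,y) \<in> S0" "y' \<in> {0..2*m}" "psi x y' \<in> {2*i, 2*i+1}"
  have x: "x \<le> 2*m" using S0_le[OF a(1)] by simp
  have y': "y' \<le> 2*m" using a(2) by simp
  from classify[OF x y' val_div[OF a(3)]] show "(x,y') \<in> S0"
  proof
    assume "\<exists>j<m. j \<noteq> j0 \<and> x div 2 = j \<and> y' div 2 = lf j"
    then obtain j where "j<m" "j \<noteq> j0" "x div 2 = j" by blast
    thus ?thesis using S0_div[OF a(1)] by auto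
  qed
next
  fix x x' y assume a: "(x,y) \<in> S0" "x' \<in> {0..2*m}" "psi x' y \<in> {2*i, 2*i+1}"
  have y: "y \<le> 2*m" using S0_le[OF a(1)] by simp
  have x': "x' \<le> 2*m" using a(2) by simp
  from classify[OF x' y val_div[OF a(3)]] show "(x',y) \<in> S0"
  proof
    assume "\<exists>j<m. j \<noteq> j0 \<and> x' div 2 = j \<and> y div 2 = lf j"
    then obtain j where j: "j<m" "j \<noteq> j0" "y div 2 = lf j" by blast
    have "y div 2 = c0 \<or> y div 2 = m" using S0_div[OF a(1)] by simp
    thus ?thesis using j lf_ne_c0[OF j(1,2)] lf[OF j(1)] unfolding c0_def by auto
  qed
qed

lemma Bk_closed: assumes jj: "j < m" "j \<noteq> j0" shows "rc_closed {0..2*m} psi (2*i) (2*i+1) (Bk j)"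
  unfolding rc_closed_def
proof (intro conjI allI impI)
  fix x y y' assume a: "(x,y) \<in> Bk j" "y' \<in> {0..2*m}" "psi x y' \<in> {2*i, 2*i+1}"
  have xy: "x div 2 = j" "y div 2 = lf j" using a(1) unfolding Bk_def mem_blk by auto
  have x: "x \<le> 2*m" using Bk_le[OF jj(1) a(1)] by simp
  have y': "y' \<le> 2*m" using a(2) by simp
  from classify[OF x y' val_div[OF a(3)]] show "(x,y') \<in> Bk j"
  proof
    assume "(x, y') \<in> S0"
    thus ?thesis using S0_div[of x y'] xy jj by auto
  next
    assume "\<exists>j'<m. j' \<noteq> j0 \<and> x div 2 = j' \<and> y' div 2 = lf j'"
    then obtain j' where "j'<m" "x div 2 = j'" "y' div 2 = lf j'" by blast
    thus ?thesis using xy unfolding Bk_def mem_blk by simp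
  qed
next
  fix x x' y assume a: "(x,y) \<in> Bk j" "x' \<in> {0..2*m}" "psi x' y \<in> {2*i, 2*i+1}"
  have xy: "x div 2 = j" "y div 2 = lf j" using a(1) unfolding Bk_def mem_blk by auto
  have y: "y \<le> 2*m" using Bk_le[OF jj(1) a(1)] by simp
  have x': "x' \<le> 2*m" using a(2) by simp
  from classify[OF x' y val_div[OF a(3)]] show "(x',y) \<in> Bk j"
  proof
    assume "(x', y) \<in> S0"
    hence "y div 2 = c0 \<or> y div 2 = m" using S0_div by simp
    thus ?thesis using xy lf_ne_c0[OF jj] lf[OF jj(1)] unfolding c0_def by auto
  next
    assume "\<exists>j'<m. j' \<noteq> j0 \<and> x' div 2 = j' \<and> y div 2 = lf j'"
    then obtain j' where "j'<m" "x' div 2 = j'" "y div 2 = lf j'" by blast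
    hence "j' = j" using lf_inj[OF _ jj(1)] xy by simp
    thus ?thesis using xy \<open>x' div 2 = j'\<close> unfolding Bk_def mem_blk by simp
  qed
qed

lemma Bk_conn: assumes jj: "j < m" "j \<noteq> j0" and cl: "rc_closed {0..2*m} psi (2*i) (2*i+1) S"
  and ne: "S \<inter> Bk j \<noteq> {}" shows "Bk j \<subseteq> S"
proof
  obtain x y where xy: "(x,y) \<in> S" "(x,y) \<in> Bk j" using ne by auto
  fix z assume z: "z \<in> Bk j"
  obtain x' y' where z': "z = (x',y')" by (cases z)
  have d: "x div 2 = j" "x' div 2 = j" "y' div 2 = lf j" using xy z z' unfolding Bk_def mem_blk by auto
  have le: "x' \<le> 2*m" "y' \<le> 2*m" using Bk_le[OF jj(1)] z z' by auto
  have "psi x y' \<in> {2*i,2*i+1}" using Bk_val[OF jj d(1) d(3)] pair_iff by blast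
  hence "(x,y') \<in> S" using rc_row[OF cl xy(1)] le by simp
  moreover have "psi x' y' \<in> {2*i,2*i+1}" using Bk_val[OF jj d(2) d(3)] pair_iff by blast
  ultimately have "(x',y') \<in> S" using rc_col[OF cl] le by simp
  thus "z \<in> S" using z' by simp
qed

lemma S0_conn: assumes cl: "rc_closed {0..2*m} psi (2*i) (2*i+1) S"
  and ne: "S \<inter> S0 \<noteq> {}" shows "S0 \<subseteq> S"
proof -
  have m2: "2*j0 \<le> 2*m" "2*j0+1 \<le> 2*m" "2*c0 \<le> 2*m" "2*c0+1 \<le> 2*m" using j0 c0 by auto
  have s1: "(2*j0, 2*c0+1) \<in> S \<Longrightarrow> (2*j0, 2*m) \<in> S" using rc_row[OF cl] v3 by simp
  have s2: "(2*j0, 2*m) \<in> S \<Longrightarrow> (2*j0+1, 2*m) \<in> S" using rc_col[OF cl] v4 m2 by simp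
  have s3: "(2*j0+1, 2*m) \<in> S \<Longrightarrow> (2*j0+1, 2*c0) \<in> S" using rc_row[OF cl] v2 m2 by simp
  have s4: "(2*j0+1, 2*c0) \<in> S \<Longrightarrow> (2*m, 2*c0) \<in> S" using rc_col[OF cl] v5 by simp
  have s5: "(2*m, 2*c0) \<in> S \<Longrightarrow> (2*m, 2*c0+1) \<in> S" using rc_row[OF cl] v6 m2 by simp
  have s6: "(2*m, 2*c0+1) \<in> S \<Longrightarrow> (2*j0, 2*c0+1) \<in> S" using rc_col[OF cl] v1 m2 by simp
  have "(2*j0, 2*c0+1) \<in> S \<or> (2*j0, 2*m) \<in> S \<or> (2*j0+1, 2*m) \<in> S \<or> (2*j0+1, 2*c0) \<in> S \<or> (2*m, 2*c0) \<in> S \<or> (2*m, 2*c0+1) \<in> S"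
    using ne unfolding S0_def by blast
  hence "(2*j0, 2*c0+1) \<in> S" using s1 s2 s3 s4 s5 s6 by blast
  hence "(2*j0, 2*c0+1) \<in> S \<and> (2*j0, 2*m) \<in> S \<and> (2*j0+1, 2*m) \<in> S \<and> (2*j0+1, 2*c0) \<in> S \<and> (2*m, 2*c0) \<in> S \<and> (2*m, 2*c0+1) \<in> S"
    using s1 s2 s3 s4 s5 by blast
  thus ?thesis unfolding S0_def by blast
qed

lemma ab: "2*i \<in> {0..2*m}" "2*i+1 \<in> {0..2*m}" using i by auto

lemma S0_comp: "is_component {0..2*m} psi (2*i) (2*i+1) S0"
  by (rule G4[OF psi_quasi ab _ S0_img S0_closed]) (use S0_le in auto)

lemma Bk_comp: "j < m \<Longrightarrow> j \<noteq> j0 \<Longrightarrow> is_component {0..2*m} psi (2*i) (2*i+1) (Bk j)"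
  by (rule G4[OF psi_quasi ab _ Bk_img Bk_closed]) (use Bk_le in auto)

lemma ab_ne: "2*i \<noteq> 2*i+1" by simp

lemma S0_G3_1: "is_min_component {0..2*m} psi (2*i) (2*i+1) S0"
  by (rule G3(1)[OF psi_quasi ab_ne S0_comp]) (erule S0_conn, assumption)
lemma S0_G3_2: "is_min_component {0..2*m} psi (2*i) (2*i+1) S \<Longrightarrow> S \<inter> S0 \<noteq> {} \<Longrightarrow> S = S0"
  by (rule G3(2)[OF psi_quasi ab_ne S0_comp]) (erule S0_conn, assumption+)
lemma Bk_G3_1: "j < m \<Longrightarrow> j \<noteq> j0 \<Longrightarrow> is_min_component {0..2*m} psi (2*i) (2*i+1) (Bk j)"
  by (rule G3(1)[OF psi_quasi ab_ne Bk_comp]) (assumption+, erule (2) Bk_conn, assumption)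
lemma Bk_G3_2: "j < m \<Longrightarrow> j \<noteq> j0 \<Longrightarrow> is_min_component {0..2*m} psi (2*i) (2*i+1) S \<Longrightarrow> S \<inter> Bk j \<noteq> {} \<Longrightarrow> S = Bk j"
  by (rule G3(2)[OF psi_quasi ab_ne Bk_comp]) (assumption+, erule (2) Bk_conn, assumption+)

lemma mins: "{S. is_min_component {0..2*m} psi (2*i) (2*i+1) S} = insert S0 (Bk ` ({..<m} - {j0}))"
proof
  show "insert S0 (Bk ` ({..<m} - {j0})) \<subseteq> {S. is_min_component {0..2*m} psi (2*i) (2*i+1) S}"
    using S0_G3_1 Bk_G3_1 by auto
next
  show "{S. is_min_component {0..2*m} psi (2*i) (2*i+1) S} \<subseteq> insert S0 (Bk ` ({..<m} - {j0}))"
  proof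
    fix S assume "S \<in> {S. is_min_component {0..2*m} psi (2*i) (2*i+1) S}"
    hence S: "is_min_component {0..2*m} psi (2*i) (2*i+1) S" by simp
    hence sub: "S \<subseteq> {0..2*m} \<times> {0..2*m}" and img: "(\<lambda>(x, y). psi x y) ` S = {2*i, 2*i+1}"
      unfolding is_min_component_def is_component_def by auto
    have "S \<noteq> {}" using img by auto
    then obtain x y where xy: "(x,y) \<in> S" by auto
    have le: "x \<le> 2*m" "y \<le> 2*m" using sub xy by auto
    have "psi x y \<in> {2*i, 2*i+1}" using img xy by force
    from classify[OF le val_div[OF this]] show "S \<in> insert S0 (Bk ` ({..<m} - {j0}))"
    proof
      assume "(x,y) \<in> S0"
      hence "S = S0" using S0_G3_2[OF S] xy by blast
      thus ?thesis by simp
    next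
      assume "\<exists>j<m. j \<noteq> j0 \<and> x div 2 = j \<and> y div 2 = lf j"
      then obtain j where j: "j<m" "j \<noteq> j0" "x div 2 = j" "y div 2 = lf j" by blast
      hence "(x,y) \<in> Bk j" unfolding Bk_def mem_blk by simp
      hence "S = Bk j" using Bk_G3_2[OF j(1,2) S] xy by blast
      thus ?thesis using j by simp
    qed
  qed
qed

lemma card_mins: "card {S. is_min_component {0..2*m} psi (2*i) (2*i+1) S} = m"
proof -
  have ni: "S0 \<notin> Bk ` ({..<m} - {j0})"
  proof
    assume "S0 \<in> Bk ` ({..<m} - {j0})"
    then obtain j where j: "j < m" "S0 = Bk j" by auto
    have "(2*j0, 2*m) \<in> S0" unfolding S0_def by simp
    hence "(2*j0, 2*m) \<in> Bk j" using j by simp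
    thus False using lf[OF j(1)] unfolding Bk_def by auto
  qed
  have inj: "inj_on Bk ({..<m} - {j0})"
  proof (rule inj_onI)
    fix j j' assume a: "j \<in> {..<m} - {j0}" "j' \<in> {..<m} - {j0}" "Bk j = Bk j'"
    have "(2*j, 2 * lf j) \<in> Bk j" unfolding Bk_def by simp
    hence "(2*j, 2 * lf j) \<in> Bk j'" using a(3) by simp
    hence "(2*j) div 2 = j'" unfolding Bk_def mem_blk by blast
    thus "j = j'" by simp
  qed
  have "card ({..<m} - {j0}) = m - 1" using j0 by simp
  hence "card (Bk ` ({..<m} - {j0})) = m - 1" using card_image[OF inj] by simp
  hence "card (insert S0 (Bk ` ({..<m} - {j0}))) = Suc (m - 1)" using ni by simp
  thus ?thesis using mins i by simp
qed

lemma S0_not_blk: "\<not> (\<exists>j<m. \<exists>l<m. S0 = {2*j, 2*j+1} \<times> {2*l, 2*l+1})"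
proof
  assume "\<exists>j<m. \<exists>l<m. S0 = {2*j, 2*j+1} \<times> {2*l, 2*l+1}"
  then obtain j l where jl: "l < m" "S0 = {2*j, 2*j+1} \<times> {2*l, 2*l+1}" by blast
  have "(2*j0, 2*m) \<in> S0" unfolding S0_def by simp
  thus False using jl by auto
qed

lemma result: "card {S. is_min_component {0..2*m} psi (2*i) (2*i+1) S} = m \<and>
       (\<exists>S0. is_min_component {0..2*m} psi (2*i) (2*i+1) S0 \<and>
          \<not> (\<exists>j<m. \<exists>l<m. S0 = {2*j, 2*j+1} \<times> {2*l, 2*l+1}) \<and>
          (\<forall>S. is_min_component {0..2*m} psi (2*i) (2*i+1) S \<and> S \<noteq> S0 \<longrightarrow>
             (\<exists>j<m. \<exists>l<m. S = {2*j, 2*j+1} \<times> {2*l, 2*l+1})))"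
proof (intro conjI exI[of _ S0] allI impI)
  show "card {S. is_min_component {0..2*m} psi (2*i) (2*i+1) S} = m" by (rule card_mins)
  show "is_min_component {0..2*m} psi (2*i) (2*i+1) S0" by (rule S0_G3_1)
  show "\<not> (\<exists>j<m. \<exists>l<m. S0 = {2*j, 2*j+1} \<times> {2*l, 2*l+1})" by (rule S0_not_blk)
next
  fix S assume "is_min_component {0..2*m} psi (2*i) (2*i+1) S \<and> S \<noteq> S0"
  hence "S \<in> Bk ` ({..<m} - {j0})" using mins by blast
  then obtain j where "j < m" "S = Bk j" by auto
  thus "\<exists>j<m. \<exists>l<m. S = {2*j, 2*j+1} \<times> {2*l, 2*l+1}" using lf[of j] unfolding Bk_def by blast
qed

end

context cons begin
lemma main: "\<exists>\<psi> :: nat \<Rightarrow> nat \<Rightarrow> nat.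
    quasigroup2 {0..2*m} \<psi> \<and>
    (\<forall>i<m.
       card {S. is_min_component {0..2*m} \<psi> (2*i) (2*i+1) S} = m \<and>
       (\<exists>S0. is_min_component {0..2*m} \<psi> (2*i) (2*i+1) S0 \<and>
          \<not> (\<exists>j<m. \<exists>l<m. S0 = {2*j, 2*j+1} \<times> {2*l, 2*l+1}) \<and>
          (\<forall>S. is_min_component {0..2*m} \<psi> (2*i) (2*i+1) S \<and> S \<noteq> S0 \<longrightarrow>
             (\<exists>j<m. \<exists>l<m. S = {2*j, 2*j+1} \<times> {2*l, 2*l+1}))))"
proof (rule exI[of _ psi], rule conjI)
  show "quasigroup2 {0..2*m} psi" by (rule psi_quasi)
  show "\<forall>i<m.
       card {S. is_min_component {0..2*m} psi (2*i) (2*i+1) S} = m \<and>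
       (\<exists>S0. is_min_component {0..2*m} psi (2*i) (2*i+1) S0 \<and>
          \<not> (\<exists>j<m. \<exists>l<m. S0 = {2*j, 2*j+1} \<times> {2*l, 2*l+1}) \<and>
          (\<forall>S. is_min_component {0..2*m} psi (2*i) (2*i+1) S \<and> S \<noteq> S0 \<longrightarrow>
             (\<exists>j<m. \<exists>l<m. S = {2*j, 2*j+1} \<times> {2*l, 2*l+1})))"
  proof (intro allI impI)
  fix i assume i: "i < m"
  interpret comp m L c ci s i by unfold_locales (rule i)
  show "card {S. is_min_component {0..2*m} psi (2*i) (2*i+1) S} = m \<and>
       (\<exists>S0. is_min_component {0..2*m} psi (2*i) (2*i+1) S0 \<and>
          \<not> (\<exists>j<m. \<exists>l<m. S0 = {2*j, 2*j+1} \<times> {2*l, 2*l+1}) \<and>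
          (\<forall>S. is_min_component {0..2*m} psi (2*i) (2*i+1) S \<and> S \<noteq> S0 \<longrightarrow>
             (\<exists>j<m. \<exists>l<m. S = {2*j, 2*j+1} \<times> {2*l, 2*l+1})))" by (rule result)
  qed
qed
end



lemma addcancel: "l < (k::nat) \<Longrightarrow> l' < k \<Longrightarrow> (j + l) mod k = (j + l') mod k \<Longrightarrow> l = l'"
proof -
  assume a: "l < k" "l' < k" "(j + l) mod k = (j + l') mod k"
  have "[j + l = j + l'] (mod k)" using a(3) by (simp add: cong_def)
  hence "[l = l'] (mod k)" by (simp add: cong_add_lcancel_nat)
  thus ?thesis using cong_less_modulus_unique_nat a by blast
qed

lemma dblcancel: "odd (k::nat) \<Longrightarrow> j < k \<Longrightarrow> j' < k \<Longrightarrow> (2*j) mod k = (2*j') mod k \<Longrightarrow> j = j'"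
proof -
  assume a: "odd k" "j < k" "j' < k" "(2*j) mod k = (2*j') mod k"
  have "[2*j = 2*j'] (mod k)" using a(4) by (simp add: cong_def)
  hence "[j = j'] (mod k)" using cong_mult_lcancel_nat[of 2 k j j'] a(1) by simp
  thus ?thesis using cong_less_modulus_unique_nat a by blast
qed

lemma bij_from_inj: "(\<And>x. x < m \<Longrightarrow> f x < (m::nat)) \<Longrightarrow> inj_on f {..<m} \<Longrightarrow> bij_betw f {..<m} {..<m}"
  using endo_inj_surj[of "{..<m}" f] unfolding bij_betw_def by auto

lemma cons_odd: assumes m: "m \<ge> 3" "odd m"
  shows "cons m (\<lambda>j l. (j + l) mod m) id id (\<lambda>j. (j + j) mod m)"
proof
  show "1 \<le> m" using m by simp
  have mp: "0 < m" using m by simp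
  fix j assume j: "j < m"
  show "bij_betw (\<lambda>l. (j + l) mod m) {..<m} {..<m}"
  proof (rule bij_from_inj)
    show "\<And>x. x < m \<Longrightarrow> (j + x) mod m < m" using mp by simp
    show "inj_on (\<lambda>l. (j + l) mod m) {..<m}"
      by (rule inj_onI) (erule addcancel[rotated 2], simp_all)
  qed
  show "bij_betw (\<lambda>i. (i + j) mod m) {..<m} {..<m}"
  proof (rule bij_from_inj)
    show "\<And>x. x < m \<Longrightarrow> (x + j) mod m < m" using mp by simp
    show "inj_on (\<lambda>i. (i + j) mod m) {..<m}"
    proof (rule inj_onI)
      fix x y assume "x \<in> {..<m}" "y \<in> {..<m}" "(x + j) mod m = (y + j) mod m"
      thus "x = y" using addcancel[of x m y j] by (simp add: add.commute)
    qed
  qed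
next
  show "\<And>j. j < m \<Longrightarrow> id j < m" by simp
next
  show "\<And>j. j < m \<Longrightarrow> id (id j) = j" by simp
next
  have mp: "0 < m" using m by simp
  show "bij_betw (\<lambda>j. (j + j) mod m) {..<m} {..<m}"
  proof (rule bij_from_inj)
    show "\<And>x. x < m \<Longrightarrow> (x + x) mod m < m" using mp by simp
    show "inj_on (\<lambda>j. (j + j) mod m) {..<m}"
    proof (rule inj_onI)
      fix x y assume "x \<in> {..<m}" "y \<in> {..<m}" "(x + x) mod m = (y + y) mod m"
      thus "x = y" using dblcancel[of m x y] m(2) by (simp add: mult_2)
    qed
  qed
next
  show "\<And>j. j < m \<Longrightarrow> (j + id j) mod m = (j + j) mod m" by simp
qed

definition Pk :: "nat \<Rightarrow> nat \<Rightarrow> nat \<Rightarrow> nat" where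
  "Pk k j l = (if j < k \<and> l < k then (if j = l then k else (j + l) mod k)
     else if j < k then (j + j) mod k else if l < k then (l + l) mod k else k)"
definition ck :: "nat \<Rightarrow> nat \<Rightarrow> nat" where
  "ck k j = (if Suc j < k then Suc j else if Suc j = k then 0 else k)"
definition cik :: "nat \<Rightarrow> nat \<Rightarrow> nat" where
  "cik k l = (if l = 0 then k - 1 else if l < k then l - 1 else k)"

lemma Pk_sym: "Pk k j l = Pk k l j"
  unfolding Pk_def by (auto simp: add.commute)

lemma Pk_le: "Pk k j l \<le> k"
  unfolding Pk_def using mod_less_divisor[of k] by (auto simp: less_imp_le)

lemma Pk_row_inj: assumes k: "odd k" "k \<ge> 3" and j: "j \<le> k"
  shows "inj_on (Pk k j) {..<Suc k}"
proof (cases "j < k")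
  case True
  have kp: "0 < k" using k by simp
  define st where "st l = (if l = k then j else l)" for l
  have v: "\<And>l. l \<le> k \<Longrightarrow> l \<noteq> j \<Longrightarrow> Pk k j l = (j + st l) mod k \<and> st l < k \<and> st l \<noteq> j \<or> l = k \<and> st l = j \<and> Pk k j l = (j + st l) mod k"
    unfolding Pk_def st_def using True by auto
  have vj: "Pk k j j = k" unfolding Pk_def using True by simp
  have mk: "\<And>a. a mod k \<noteq> k" using kp by (metis less_not_refl mod_less_divisor)
  show ?thesis
  proof (rule inj_onI)
    fix l l' assume l: "l \<in> {..<Suc k}" and l': "l' \<in> {..<Suc k}" and e: "Pk k j l = Pk k j l'"
    have lk: "l \<le> k" "l' \<le> k" using l l' by auto
    show "l = l'"
    proof (cases "l = j \<or> l' = j")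
      case True
      have nk: "\<And>l. l \<le> k \<Longrightarrow> l \<noteq> j \<Longrightarrow> Pk k j l \<noteq> k"
        using v mk by metis
      show ?thesis using True e vj nk[OF lk(1)] nk[OF lk(2)] by metis
    next
      case False
      hence ne: "l \<noteq> j" "l' \<noteq> j" by auto
      have st: "st l < k" "st l' < k" "(j + st l) mod k = (j + st l') mod k"
        using v[OF lk(1) ne(1)] v[OF lk(2) ne(2)] e True by auto
      have "st l = st l'" by (rule addcancel[OF st])
      thus ?thesis using ne lk unfolding st_def by (auto split: if_splits)
    qed
  qed
next
  case False
  hence jk: "j = k" using j by simp
  have kp: "0 < k" using k by simp
  have mk: "\<And>a. a mod k \<noteq> k" using kp by (metis less_not_refl mod_less_divisor)
  show ?thesis
  proof (rule inj_onI)
    fix l l' assume l: "l \<in> {..<Suc k}" and l': "l' \<in> {..<Suc k}" and e: "Pk k j l = Pk k j l'"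
    have lk: "l \<le> k" "l' \<le> k" using l l' by auto
    show "l = l'"
    proof (cases "l < k \<and> l' < k")
      case True
      hence "(l + l) mod k = (l' + l') mod k" using e jk unfolding Pk_def by simp
      thus ?thesis using dblcancel[of k l l'] True k by (simp add: mult_2)
    next
      case False
      thus ?thesis using e jk lk mk[of "l + l"] mk[of "l' + l'"] unfolding Pk_def by (auto simp: le_less split: if_splits)
    qed
  qed
qed

lemma Pk_row_bij: assumes k: "odd k" "k \<ge> 3" and j: "j < Suc k"
  shows "bij_betw (Pk k j) {..<Suc k} {..<Suc k}"
  by (rule bij_from_inj) (use Pk_le Pk_row_inj[OF k] j in \<open>auto simp: le_imp_less_Suc\<close>)

lemma sv: assumes k: "k \<ge> 3" and j: "j \<le> k"
  shows "Pk k j (ck k j) = (if j < k - 1 then (2*j+1) mod k else j)"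
  using k j unfolding Pk_def ck_def by (auto simp: mult_2)

lemma s_inj_even: assumes k: "odd k" "k \<ge> 3"
  shows "inj_on (\<lambda>j. Pk k j (ck k j)) {..<Suc k}"
proof (rule inj_onI)
  fix j j' assume j: "j \<in> {..<Suc k}" and j': "j' \<in> {..<Suc k}" and e: "Pk k j (ck k j) = Pk k j' (ck k j')"
  have jk: "j \<le> k" "j' \<le> k" using j j' by auto
  have kp: "0 < k" using k by simp
  have mk: "\<And>a. a mod k < k" using kp by simp
  have e2: "(if j < k - 1 then (2*j+1) mod k else j) = (if j' < k - 1 then (2*j'+1) mod k else j')"
    using e sv[OF k(2) jk(1)] sv[OF k(2) jk(2)] by simp
  have key: "\<And>a. a < k - 1 \<Longrightarrow> (2*a+1) mod k \<noteq> k - 1"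
  proof
    fix a assume a: "a < k - 1" "(2*a+1) mod k = k - 1"
    have "Suc (2*a+1) mod k = 0" using a(2) kp by (simp add: mod_Suc)
    hence "(2*(a+1)) mod k = (2*0) mod k" by simp
    moreover have "a + 1 < k" using a(1) by arith
    ultimately have "a + 1 = 0" using dblcancel[of k "a+1" 0] k kp by simp
    thus False by simp
  qed
  have key2: "\<And>a b. a < k - 1 \<Longrightarrow> b < k - 1 \<Longrightarrow> (2*a+1) mod k = (2*b+1) mod k \<Longrightarrow> a = b"
  proof -
    fix a b assume a: "a < k - 1" "b < k - 1" "(2*a+1) mod k = (2*b+1) mod k"
    have "[2*a + 1 = 2*b + 1] (mod k)" using a(3) by (simp add: cong_def)
    hence "[2*a = 2*b] (mod k)" using cong_add_rcancel_nat[of "2*a" 1 "2*b" k] by simp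
    hence "(2*a) mod k = (2*b) mod k" by (simp add: cong_def)
    thus "a = b" using dblcancel[of k a b] k a by simp
  qed
  show "j = j'"
  proof (cases "j < k - 1")
    case True
    show ?thesis
    proof (cases "j' < k - 1")
      case True
      thus ?thesis using key2 e2 \<open>j < k - 1\<close> by auto
    next
      case False
      hence "(2*j+1) mod k = j'" using e2 \<open>j < k - 1\<close> by simp
      moreover have "j' = k - 1" using mk[of "2*j+1"] calculation False by simp
      ultimately show ?thesis using key[OF True] by simp
    qed
  next
    case False
    show ?thesis
    proof (cases "j' < k - 1")
      case True
      hence "(2*j'+1) mod k = j" using e2 False by simp
      moreover have "j = k - 1" using mk[of "2*j'+1"] calculation False by simp
      ultimately show ?thesis using key[OF True] by simp
    next
      case False
      thus ?thesis using e2 \<open>\<not> j < k - 1\<close> by simp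
    qed
  qed
qed

lemma cons_even: assumes k: "odd k" "k \<ge> 3"
  shows "cons (Suc k) (Pk k) (ck k) (cik k) (\<lambda>j. Pk k j (ck k j))"
proof
  show "1 \<le> Suc k" by simp
next
  show "\<And>j. j < Suc k \<Longrightarrow> bij_betw (Pk k j) {..<Suc k} {..<Suc k}" by (rule Pk_row_bij[OF k])
next
  fix l assume l: "l < Suc k"
  have "(\<lambda>j. Pk k j l) = Pk k l" by (rule ext) (rule Pk_sym)
  thus "bij_betw (\<lambda>j. Pk k j l) {..<Suc k} {..<Suc k}" using Pk_row_bij[OF k l] by simp
next
  show "\<And>j. j < Suc k \<Longrightarrow> ck k j < Suc k" unfolding ck_def by auto
next
  show "\<And>l. l < Suc k \<Longrightarrow> cik k l < Suc k" unfolding cik_def by auto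
next
  show "\<And>l. l < Suc k \<Longrightarrow> ck k (cik k l) = l" unfolding ck_def cik_def using k by auto
next
  show "\<And>j. j < Suc k \<Longrightarrow> cik k (ck k j) = j" unfolding ck_def cik_def using k by auto
next
  show "bij_betw (\<lambda>j. Pk k j (ck k j)) {..<Suc k} {..<Suc k}"
  proof (rule bij_from_inj)
    show "\<And>x. x < Suc k \<Longrightarrow> Pk k x (ck k x) < Suc k" using Pk_le by (simp add: le_imp_less_Suc)
    show "inj_on (\<lambda>j. Pk k j (ck k j)) {..<Suc k}" by (rule s_inj_even[OF k])
  qed
next
  show "\<And>j. j < Suc k \<Longrightarrow> Pk k j (ck k j) = Pk k j (ck k j)" by simp
qed

lemma cons_exists: "m \<ge> 3 \<Longrightarrow> \<exists>L c ci s. cons m L c ci s"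
proof (cases "odd m")
  case True
  assume "m \<ge> 3" thus ?thesis using cons_odd[OF _ True] by blast
next
  case False
  assume m: "m \<ge> 3"
  then obtain k where mk: "m = Suc k" by (cases m) auto
  have "m \<noteq> 3" using False by auto
  hence k: "odd k" "k \<ge> 3" using False m mk by auto
  show ?thesis using cons_even[OF k] mk by blast
qed


theorem proposition5:
  fixes m :: nat
  assumes "m \<ge> 3"
  shows "\<exists>\<psi> :: nat \<Rightarrow> nat \<Rightarrow> nat.
    quasigroup2 {0..2*m} \<psi> \<and>
    (\<forall>i<m.
       card {S. is_min_component {0..2*m} \<psi> (2*i) (2*i+1) S} = m \<and>
       (\<exists>S0. is_min_component {0..2*m} \<psi> (2*i) (2*i+1) S0 \<and>
          \<not> (\<exists>j<m. \<exists>l<m. S0 = {2*j, 2*j+1} \<times> {2*l, 2*l+1}) \<and>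
          (\<forall>S. is_min_component {0..2*m} \<psi> (2*i) (2*i+1) S \<and> S \<noteq> S0 \<longrightarrow>
             (\<exists>j<m. \<exists>l<m. S = {2*j, 2*j+1} \<times> {2*l, 2*l+1}))))"
proof -
  obtain L c ci s where "cons m L c ci s" using cons_exists[OF assms] by blast
  thus ?thesis by (rule cons.main)
qed

end
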